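(* Let $c\ge 2$ be an integer and $\lambda,\mu,\alpha>0$ with $\lambda<c\mu$. Let $(\pi_{i,j})_{(i,j)\in\mathcal S}$ be the stationary distribution of the continuous-time Markov chain on $\mathcal S=\{(i,j):0\le i\le c,\ j\ge i\}$ whose only transitions are: $(i,j)\to(i,j+1)$ at rate $\lambda$; $(i,j)\to(i+1,j)$ at rate $\min(j-i,c-i)\alpha$ for $i<c$, $j>i$; $(i,j)\to(i,j-1)$ at rate $i\mu$ for $i\ge1$, $j>i$; $(i,i)\to(i-1,i-1)$ at rate $i\mu$ for $i\ge 1$. Let $f_1(z)=(\lambda+\mu+(c-1)\alpha)z-\lambda z^2-\mu$, with roots $z_1=\frac{\lambda+\mu+(c-1)\alpha-\sqrt{(\lambda+\mu+(c-1)\alpha)^2-4\lambda\mu}}{2\lambda}$ and $\hat z_1=\frac{\lambda+\mu+(c-1)\alpha+\sqrt{(\lambda+\mu+(c-1)\alpha)^2-4\lambda\mu}}{2\lambda}$ (so $0<z_1<1<\hat z_1$), and let $\hat z_0=(\lambda+c\alpha)/\lambda$. Define $\widehat\Pi_0(z)=\sum_{j\ge c}\pi_{0,j}z^{j}$ and $\widehat\Pi_1(z)=\sum_{j\ge c}\pi_{1,j}z^{j-1}$. Define $a^{(1)}_c=\frac{c\alpha\widehat\Pi_0(z_1)}{\mu z_1^{c-1}}$, $b^{(1)}_c=\frac{\lambda z_1}{\mu}$, and for $j=c-1,c-2,\dots,1$, $$a^{(1)}_j=\frac{j\alpha\pi_{0,j}+\mu a^{(1)}_{j+1}}{\lambda+\mu+(j-1)\alpha-\mu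 b^{(1)}_{j+1}},\qquad b^{(1)}_j=\frac{\lambda}{\lambda+\mu+(j-1)\alpha-\mu b^{(1)}_{j+1}}.$$ Then: (i) $\pi_{1,j}=a^{(1)}_j+b^{(1)}_j\pi_{1,j-1}$ for $2\le j\le c$; (ii) $a^{(1)}_j>0$ and $0<b^{(1)}_j<\lambda/\mu$ for $j=1,\dots,c$; (iii) if $\hat z_0\neq\hat z_1$, then for all complex $z$ with $|z|\le 1$, $$\widehat\Pi_1(z)=z^{c-1}\left(\frac{A_{1,0}}{\hat z_0-z}+\frac{A_{1,1}}{\hat z_1-z}\right),\quad A_{1,0}=\frac{c\alpha\,\pi_{0,c-1}\hat z_0}{f_1(\hat z_0)},\quad A_{1,1}=\pi_{1,c-1}-A_{1,0}.$$
   Context: The chain models an M/M/$c$ queue with setup times under the ON-OFF policy: $i$ is the number of busy servers, $j$ the number of jobs in the system; arrivals are Poisson($\lambda$), services exp($\mu$), setups exp($\alpha$), and $\min(j-i,c-i)$ servers are in setup in state $(i,j)$. The condition $\lambda<c\mu$ guarantees a unique stationary distribution. *)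

theory Defs
  imports "HOL-Analysis.Analysis"
begin

type_synonym state = "nat \<times> nat"

definition stateS :: "nat \<Rightarrow> state set" where
  "stateS c = {(i,j). i \<le> c \<and> i \<le> j}"

definition rate :: "nat \<Rightarrow> real \<Rightarrow> real \<Rightarrow> real \<Rightarrow> state \<Rightarrow> state \<Rightarrow> real" where
  "rate c lam mu alpha s t =
     (let i = fst s; j = snd s in
       (if t = (i, j + 1) then lam else 0)
     + (if i < c \<and> j > i \<and> t = (i + 1, j) then real (min (j - i) (c - i)) * alpha else 0)
     + (if i \<ge> 1 \<and> j > i \<and> t = (i, j - 1) then real i * mu else 0)
     + (if i \<ge> 1 \<and> j = i \<and> t = (i - 1, i - 1) then real i * mu else 0))"

text \<open>A finite window containing all states reachable from, or leading into, (i,j) in one step.\<close>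
definition window :: "nat \<Rightarrow> state \<Rightarrow> state set" where
  "window c s = {t. t \<in> stateS c \<and> snd t \<le> snd s + 1 \<and> t \<noteq> s}"

definition out_rate :: "nat \<Rightarrow> real \<Rightarrow> real \<Rightarrow> real \<Rightarrow> state \<Rightarrow> real" where
  "out_rate c lam mu alpha s = (\<Sum>t\<in>window c s. rate c lam mu alpha s t)"

definition stationary :: "nat \<Rightarrow> real \<Rightarrow> real \<Rightarrow> real \<Rightarrow> (state \<Rightarrow> real) \<Rightarrow> bool" where
  "stationary c lam mu alpha p \<longleftrightarrow>
     (\<forall>s\<in>stateS c. p s \<ge> 0) \<and>
     (p has_sum 1) (stateS c) \<and>
     (\<forall>s\<in>stateS c. p s * out_rate c lam mu alpha s =
        (\<Sum>t\<in>window c s. p t * rate c lam mu alpha t s))"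

definition f1 :: "nat \<Rightarrow> real \<Rightarrow> real \<Rightarrow> real \<Rightarrow> real \<Rightarrow> real" where
  "f1 c lam mu alpha z = (lam + mu + (real c - 1) * alpha) * z - lam * z\<^sup>2 - mu"

definition z1 :: "nat \<Rightarrow> real \<Rightarrow> real \<Rightarrow> real \<Rightarrow> real" where
  "z1 c lam mu alpha =
     (lam + mu + (real c - 1) * alpha
       - sqrt ((lam + mu + (real c - 1) * alpha)\<^sup>2 - 4 * lam * mu)) / (2 * lam)"

definition zhat1 :: "nat \<Rightarrow> real \<Rightarrow> real \<Rightarrow> real \<Rightarrow> real" where
  "zhat1 c lam mu alpha =
     (lam + mu + (real c - 1) * alpha
       + sqrt ((lam + mu + (real c - 1) * alpha)\<^sup>2 - 4 * lam * mu)) / (2 * lam)"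

definition zhat0 :: "nat \<Rightarrow> real \<Rightarrow> real \<Rightarrow> real" where
  "zhat0 c lam alpha = (lam + real c * alpha) / lam"

definition Pi0hat :: "nat \<Rightarrow> (state \<Rightarrow> real) \<Rightarrow> real \<Rightarrow> real" where
  "Pi0hat c p z = (\<Sum>\<^sub>\<infinity>j\<in>{c..}. p (0, j) * z ^ j)"

definition Pi1hat :: "nat \<Rightarrow> (state \<Rightarrow> real) \<Rightarrow> complex \<Rightarrow> complex" where
  "Pi1hat c p z = (\<Sum>\<^sub>\<infinity>j\<in>{c..}. complex_of_real (p (1, j)) * z ^ (j - 1))"

text \<open>The pair (a_j, b_j) computed by backward recursion, indexed by k = c - j.\<close>
primrec ab_rec :: "nat \<Rightarrow> real \<Rightarrow> real \<Rightarrow> real \<Rightarrow> (state \<Rightarrow> real) \<Rightarrow> nat \<Rightarrow> real \<times> real" where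
  "ab_rec c lam mu alpha p 0 =
     (real c * alpha * Pi0hat c p (z1 c lam mu alpha) / (mu * (z1 c lam mu alpha) ^ (c - 1)),
      lam * z1 c lam mu alpha / mu)"
| "ab_rec c lam mu alpha p (Suc k) =
     (let (a', b') = ab_rec c lam mu alpha p k; j = c - Suc k;
          d = lam + mu + (real j - 1) * alpha - mu * b' in
      ((real j * alpha * p (0, j) + mu * a') / d, lam / d))"

definition a1 :: "nat \<Rightarrow> real \<Rightarrow> real \<Rightarrow> real \<Rightarrow> (state \<Rightarrow> real) \<Rightarrow> nat \<Rightarrow> real" where
  "a1 c lam mu alpha p j = fst (ab_rec c lam mu alpha p (c - j))"

definition b1 :: "nat \<Rightarrow> real \<Rightarrow> real \<Rightarrow> real \<Rightarrow> (state \<Rightarrow> real) \<Rightarrow> nat \<Rightarrow> real" where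
  "b1 c lam mu alpha p j = snd (ab_rec c lam mu alpha p (c - j))"

end

theory Submission
  imports Defs
begin

lemma rate_out:
  "rate c lam mu alpha (i,j) t =
     (if t = (i,j+1) then lam else 0)
   + (if t = (i+1,j) then (if i<c \<and> i<j then real (min (j-i) (c-i)) * alpha else 0) else 0)
   + (if t = (i,j-1) then (if 1\<le>i \<and> i<j then real i * mu else 0) else 0)
   + (if t = (i-1,i-1) then (if 1\<le>i \<and> j=i then real i * mu else 0) else 0)"
proof -
  have g: "\<And>P t X (v::real). (if P \<and> t = X then v else 0) = (if t = X then (if P then v else 0) else 0)"
    by simp
  show ?thesis unfolding rate_def Let_def fst_conv snd_conv
    by (simp only: g conj_assoc[symmetric])
qed

lemma rate_in:
  assumes "i \<le> j"
  shows "rate c lam mu alpha t (i,j) =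
     (if t = (i,j-1) then (if 1\<le>j then lam else 0) else 0)
   + (if t = (i-1,j) then (if 1\<le>i \<and> i-1<c \<and> i-1<j then real (min (j-(i-1)) (c-(i-1))) * alpha else 0) else 0)
   + (if t = (i,j+1) then (if 1\<le>i then real i * mu else 0) else 0)
   + (if t = (i+1,i+1) then (if j=i then real (i+1) * mu else 0) else 0)"
proof -
  obtain a b where t: "t = (a,b)" by (cases t)
  have T1: "(if (i,j) = (a,b+1) then lam else 0) = (if (a,b) = (i,j-1) then (if 1\<le>j then lam else 0) else 0)"
    by auto
  have T2: "(if a < c \<and> b > a \<and> (i,j) = (a+1,b) then real (min (b-a) (c-a)) * alpha else 0)
     = (if (a,b) = (i-1,j) then (if 1\<le>i \<and> i-1<c \<and> i-1<j then real (min (j-(i-1)) (c-(i-1))) * alpha else 0) else 0)"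
    by auto
  have T3: "(if a \<ge> 1 \<and> b > a \<and> (i,j) = (a,b-1) then real a * mu else 0)
     = (if (a,b) = (i,j+1) then (if 1\<le>i then real i * mu else 0) else 0)"
    using assms by auto
  have T4: "(if a \<ge> 1 \<and> b = a \<and> (i,j) = (a-1,a-1) then real a * mu else 0)
     = (if (a,b) = (i+1,i+1) then (if j=i then real (i+1) * mu else 0) else 0)"
    by auto
  show ?thesis unfolding t rate_def Let_def fst_conv snd_conv T1 T2 T3 T4 ..
qed

lemma finite_window: "finite (window c s)"
proof -
  have "window c s \<subseteq> {0..c} \<times> {0..snd s + 1}"
    by (auto simp: window_def stateS_def)
  then show ?thesis by (rule finite_subset) auto
qed

lemma out_rate_eq:
  assumes "(i,j) \<in> stateS c"
  shows "out_rate c lam mu alpha (i,j) = lam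
    + (if i<c \<and> i<j then real (min (j-i) (c-i)) * alpha else 0)
    + (if 1\<le>i \<and> i<j then real i * mu else 0)
    + (if 1\<le>i \<and> j=i then real i * mu else 0)"
  using assms
  unfolding out_rate_def rate_out
  by (simp add: sum.distrib finite_window) (auto simp: window_def stateS_def)

lemma in_eq:
  assumes "(i,j) \<in> stateS c"
  shows "(\<Sum>t\<in>window c (i,j). p t * rate c lam mu alpha t (i,j)) =
      (if 1\<le>j \<and> i \<le> j-1 then p (i,j-1) * lam else 0)
    + (if 1\<le>i then p (i-1,j) * (real (min (j-(i-1)) (c-(i-1))) * alpha) else 0)
    + (if 1\<le>i then p (i,j+1) * (real i * mu) else 0)
    + (if j=i \<and> i+1\<le>c then p (i+1,i+1) * (real (i+1) * mu) else 0)"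
proof -
  have ij: "i \<le> j" using assms by (simp add: stateS_def)
  have e: "\<And>t. p t * rate c lam mu alpha t (i,j) =
     (if t = (i,j-1) then p (i,j-1) * (if 1\<le>j then lam else 0) else 0)
   + (if t = (i-1,j) then p (i-1,j) * (if 1\<le>i \<and> i-1<c \<and> i-1<j then real (min (j-(i-1)) (c-(i-1))) * alpha else 0) else 0)
   + (if t = (i,j+1) then p (i,j+1) * (if 1\<le>i then real i * mu else 0) else 0)
   + (if t = (i+1,i+1) then p (i+1,i+1) * (if j=i then real (i+1) * mu else 0) else 0)"
    unfolding rate_in[OF ij] by (simp add: distrib_left)
  have m1: "(i,j-1) \<in> window c (i,j) \<longleftrightarrow> 1\<le>j \<and> i \<le> j-1"
    using assms by (auto simp: window_def stateS_def)
  have m3: "(i,j+1) \<in> window c (i,j)"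
    using assms by (auto simp: window_def stateS_def)
  have m4: "(i+1,i+1) \<in> window c (i,j) \<longleftrightarrow> i+1 \<le> c"
    using assms by (auto simp: window_def stateS_def)
  have m2: "1 \<le> i \<Longrightarrow> (i-1,j) \<in> window c (i,j)"
    using assms by (auto simp: window_def stateS_def)
  have c2: "1 \<le> i \<Longrightarrow> i-1<c \<and> i-1<j" using assms by (auto simp: stateS_def)
  show ?thesis
    unfolding e sum.distrib
    apply (simp only: sum.delta[OF finite_window] m1 m3 m4 if_True)
    using m2 c2 by auto
qed


locale setting =
  fixes c :: nat and lam mu alpha :: real and p :: "nat \<times> nat \<Rightarrow> real"
  assumes c2: "c \<ge> 2" and lam: "lam > 0" and mu: "mu > 0" and alpha: "alpha > 0"
    and stab: "lam < real c * mu"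
    and st: "stationary c lam mu alpha p"
begin

lemma nonneg: "i \<le> c \<Longrightarrow> i \<le> j \<Longrightarrow> p (i,j) \<ge> 0"
  using st by (auto simp: stationary_def stateS_def)

lemma hs: "(p has_sum 1) (stateS c)"
  using st by (auto simp: stationary_def)

lemma bal:
  assumes "i \<le> c" "i \<le> j"
  shows "p (i,j) * (lam
    + (if i<c \<and> i<j then real (min (j-i) (c-i)) * alpha else 0)
    + (if 1\<le>i \<and> i<j then real i * mu else 0)
    + (if 1\<le>i \<and> j=i then real i * mu else 0)) =
      (if 1\<le>j \<and> i \<le> j-1 then p (i,j-1) * lam else 0)
    + (if 1\<le>i then p (i-1,j) * (real (min (j-(i-1)) (c-(i-1))) * alpha) else 0)
    + (if 1\<le>i then p (i,j+1) * (real i * mu) else 0)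
    + (if j=i \<and> i+1\<le>c then p (i+1,i+1) * (real (i+1) * mu) else 0)"
proof -
  have S: "(i,j) \<in> stateS c" using assms by (simp add: stateS_def)
  then have "p (i,j) * out_rate c lam mu alpha (i,j) = (\<Sum>t\<in>window c (i,j). p t * rate c lam mu alpha t (i,j))"
    using st by (auto simp: stationary_def)
  then show ?thesis unfolding out_rate_eq[OF S] in_eq[OF S] .
qed

lemma level0:
  assumes "j \<ge> 1"
  shows "p (0,j) * (lam + real (min j c) * alpha) = lam * p (0,j-1)"
  using bal[of 0 j] assms c2 by simp

lemma level1:
  assumes "j \<ge> 2"
  shows "p (1,j) * (lam + real (min (j-1) (c-1)) * alpha + mu)
     = lam * p (1,j-1) + p (0,j) * (real (min j c) * alpha) + mu * p (1,j+1)"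
  using bal[of 1 j] assms c2 by (simp add: algebra_simps)

lemma zero_prop:
  assumes "i \<le> c" "i \<le> j" "p (i,j) = 0"
  shows "(1 \<le> i \<longrightarrow> p (i,j+1) = 0 \<and> p (i-1,j) = 0) \<and> (j = i \<and> i+1 \<le> c \<longrightarrow> p (i+1,i+1) = 0)"
proof -
  define t1 where "t1 = (if 1\<le>j \<and> i \<le> j-1 then p (i,j-1) * lam else 0)"
  define t2 where "t2 = (if 1\<le>i then p (i-1,j) * (real (min (j-(i-1)) (c-(i-1))) * alpha) else 0)"
  define t3 where "t3 = (if 1\<le>i then p (i,j+1) * (real i * mu) else 0)"
  define t4 where "t4 = (if j=i \<and> i+1\<le>c then p (i+1,i+1) * (real (i+1) * mu) else 0)"
  have s: "t1 + t2 + t3 + t4 = 0" using bal[OF assms(1,2)] assms(3) unfolding t1_def t2_def t3_def t4_def by simp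
  have n1: "t1 \<ge> 0" unfolding t1_def using assms lam nonneg[of i "j-1"] by auto
  have n2: "t2 \<ge> 0" unfolding t2_def using assms alpha nonneg[of "i-1" j] by auto
  have n3: "t3 \<ge> 0" unfolding t3_def using assms mu nonneg[of i "j+1"] by auto
  have n4: "t4 \<ge> 0" unfolding t4_def using assms mu nonneg[of "i+1" "i+1"] by auto
  have z: "t2 = 0" "t3 = 0" "t4 = 0" using s n1 n2 n3 n4 by linarith+
  have pos2: "1 \<le> i \<Longrightarrow> real (min (j-(i-1)) (c-(i-1))) * alpha > 0"
    using assms alpha by auto
  show ?thesis using z pos2 mu unfolding t2_def t3_def t4_def by (auto split: if_splits)
qed

lemma p00_pos: "p (0,0) > 0"
proof (rule ccontr)
  assume "\<not> p (0,0) > 0"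
  then have z0: "p (0,0) = 0" using nonneg[of 0 0] by linarith
  have diag: "i \<le> c \<Longrightarrow> p (i,i) = 0" for i
  proof (induction i)
    case 0 then show ?case using z0 by simp
  next
    case (Suc i) then show ?case using zero_prop[of i i] by auto
  qed
  have lev: "1 \<le> i \<Longrightarrow> i \<le> c \<Longrightarrow> p (i,i+k) = 0" for i k
  proof (induction k)
    case 0 then show ?case using diag by simp
  next
    case (Suc k) then show ?case using zero_prop[of i "i+k"] by auto
  qed
  have all: "p s = 0" if sS: "s \<in> stateS c" for s
  proof -
    obtain i j where s: "s = (i,j)" "i \<le> c" "i \<le> j" by (cases s) (use sS in \<open>auto simp: stateS_def\<close>)
    show ?thesis
    proof (cases "i = 0")
      case True
      show ?thesis
      proof (cases "j = 0")
        case True then show ?thesis using s \<open>i=0\<close> z0 by simp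
      next
        case False
        have "p (1,j) = 0" using lev[of 1 "j-1"] False c2 by simp
        then show ?thesis using zero_prop[of 1 j] False c2 s True by auto
      qed
    next
      case False
      then show ?thesis using lev[of i "j-i"] s by simp
    qed
  qed
  have "(p has_sum 0) (stateS c)"
    using has_sum_cong[of "stateS c" p "\<lambda>_. 0" 0] all by simp
  then show False using hs has_sum_unique by fastforce
qed

lemma p_le1: "i \<le> c \<Longrightarrow> i \<le> j \<Longrightarrow> p (i,j) \<le> 1"
proof -
  assume a: "i \<le> c" "i \<le> j"
  have "(p has_sum p (i,j)) {(i,j)}" by (rule has_sum_finiteI) auto
  then show ?thesis
    by (rule has_sum_mono_neutral[OF _ hs]) (use a nonneg in \<open>auto simp: stateS_def\<close>)
qed

lemma p0_pos: "p (0,j) > 0"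
proof (induction j)
  case 0 then show ?case by (rule p00_pos)
next
  case (Suc j)
  have "p (0,Suc j) * (lam + real (min (Suc j) c) * alpha) = lam * p (0,j)"
    using level0[of "Suc j"] by simp
  moreover have "lam + real (min (Suc j) c) * alpha > 0" using lam alpha by (simp add: add_pos_nonneg)
  moreover have "lam * p (0,j) > 0" using lam Suc by simp
  ultimately show ?case by (metis zero_less_mult_pos2 less_eq_real_def)
qed

end


context setting begin

definition "LL = lam + mu + (real c - 1) * alpha"
definition "DD = LL^2 - 4 * lam * mu"
definition "rho = lam / (lam + real c * alpha)"
definition "pi0 = p (0, c - 1)"
definition "q k = p (1, c - 1 + k)"

lemma LL_gt: "LL > lam + mu"
proof -
  have "real c - 1 > 0" using c2 by simp
  then show ?thesis unfolding LL_def using alpha by simp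
qed

lemma DD_pos: "DD > 0"
proof -
  have "(lam + mu)^2 - 4 * lam * mu = (lam - mu)^2" by (simp add: power2_eq_square algebra_simps)
  moreover have "(lam - mu)^2 \<ge> 0" by simp
  ultimately have "(lam + mu)^2 \<ge> 4 * lam * mu" by linarith
  moreover have "LL^2 > (lam+mu)^2" using LL_gt lam mu by (simp add: power_strict_mono)
  ultimately show ?thesis unfolding DD_def by linarith
qed

lemma z1_eq: "z1 c lam mu alpha = (LL - sqrt DD) / (2*lam)"
  by (simp add: z1_def LL_def DD_def)
lemma zh1_eq: "zhat1 c lam mu alpha = (LL + sqrt DD) / (2*lam)"
  by (simp add: zhat1_def LL_def DD_def)

lemma vieta: "z1 c lam mu alpha * zhat1 c lam mu alpha = mu / lam"
     "z1 c lam mu alpha + zhat1 c lam mu alpha = LL / lam"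
proof -
  have sq: "(sqrt DD)^2 = DD" using DD_pos by simp
  have "(LL - sqrt DD) * (LL + sqrt DD) = LL^2 - (sqrt DD)^2" by (simp add: algebra_simps power2_eq_square)
  also have "\<dots> = 4 * lam * mu" using sq by (simp add: DD_def)
  finally have e: "(LL - sqrt DD) * (LL + sqrt DD) = 4 * lam * mu" .
  show "z1 c lam mu alpha * zhat1 c lam mu alpha = mu / lam"
    unfolding z1_eq zh1_eq using e lam by (simp add: field_simps power2_eq_square)
  show "z1 c lam mu alpha + zhat1 c lam mu alpha = LL / lam"
    unfolding z1_eq zh1_eq using lam by (simp add: field_simps)
qed

lemma f1_factor: "f1 c lam mu alpha x = - lam * (x - z1 c lam mu alpha) * (x - zhat1 c lam mu alpha)"
proof -
  have "- lam * (x - z1 c lam mu alpha) * (x - zhat1 c lam mu alpha)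
     = - lam * x^2 + lam * (z1 c lam mu alpha + zhat1 c lam mu alpha) * x - lam * (z1 c lam mu alpha * zhat1 c lam mu alpha)"
    by (simp add: algebra_simps power2_eq_square)
  also have "\<dots> = - lam * x^2 + LL * x - mu" unfolding vieta using lam by simp
  finally show ?thesis unfolding f1_def LL_def by simp
qed

lemma z1_root: "lam * (z1 c lam mu alpha)^2 - LL * z1 c lam mu alpha + mu = 0"
  using f1_factor[of "z1 c lam mu alpha"] unfolding f1_def LL_def by simp

lemma z1_le_zh1: "z1 c lam mu alpha \<le> zhat1 c lam mu alpha"
proof -
  have "sqrt DD \<ge> 0" using DD_pos by simp
  then show ?thesis unfolding z1_eq zh1_eq using lam by (intro divide_right_mono) auto
qed

lemma z1_pos: "z1 c lam mu alpha > 0"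
proof -
  have "4 * lam * mu > 0" using lam mu by simp
  then have "DD < LL^2" unfolding DD_def by linarith
  then have "sqrt DD < sqrt (LL^2)" by (rule real_sqrt_less_mono)
  moreover have "LL > 0" using LL_gt lam mu by linarith
  then have "sqrt (LL^2) = LL" by (simp only: real_sqrt_abs abs_of_pos)
  ultimately have "LL - sqrt DD > 0" by linarith
  then show ?thesis unfolding z1_eq using lam by simp
qed

lemma z1_lt1: "z1 c lam mu alpha < 1" and zh1_gt1: "zhat1 c lam mu alpha > 1"
proof -
  have "f1 c lam mu alpha 1 > 0" unfolding f1_def using c2 alpha by simp
  moreover have "f1 c lam mu alpha 1 = lam * ((1 - z1 c lam mu alpha) * (zhat1 c lam mu alpha - 1))"
    unfolding f1_factor by algebra
  ultimately have pr: "(1 - z1 c lam mu alpha) * (zhat1 c lam mu alpha - 1) > 0"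
    using lam zero_less_mult_pos by metis
  show "z1 c lam mu alpha < 1"
  proof (rule ccontr)
    assume "\<not> ?thesis"
    then have "1 - z1 c lam mu alpha \<le> 0" "zhat1 c lam mu alpha - 1 \<ge> 0" using z1_le_zh1 by auto
    then have "(1 - z1 c lam mu alpha) * (zhat1 c lam mu alpha - 1) \<le> 0" by (rule mult_nonpos_nonneg)
    then show False using pr by simp
  qed
  then have "1 - z1 c lam mu alpha > 0" by simp
  then show "zhat1 c lam mu alpha > 1" using pr by (simp add: zero_less_mult_iff)
qed

lemma cal_pos: "real c * alpha > 0" using c2 alpha by simp
lemma den_pos: "lam + real c * alpha > 0" using lam cal_pos by linarith
lemma rho_pos: "rho > 0"
  unfolding rho_def using lam den_pos by (rule divide_pos_pos)
lemma rho_lt1: "rho < 1"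
  unfolding rho_def using lam cal_pos den_pos by (subst divide_less_eq_1_pos) auto

lemma zhat0_rho: "zhat0 c lam alpha = 1 / rho"
  unfolding zhat0_def rho_def by (simp only: divide_divide_eq_right mult_1_left)

lemma pi0_pos: "pi0 > 0" unfolding pi0_def by (rule p0_pos)

lemma p0_closed: "p (0, c - 1 + k) = pi0 * rho ^ k"
proof (induction k)
  case 0 then show ?case by (simp add: pi0_def)
next
  case (Suc k)
  have mn: "min (c - 1 + Suc k) c = c" "c - 1 + Suc k - 1 = c - 1 + k" using c2 by auto
  have eq: "p (0, c - 1 + Suc k) * (lam + real c * alpha) = lam * p (0, c - 1 + k)"
    using level0[of "c - 1 + Suc k"] unfolding mn by simp
  have pos: "lam + real c * alpha > 0" using lam alpha by (simp add: add_pos_nonneg)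
  have "p (0, c - 1 + Suc k) = (p (0, c - 1 + Suc k) * (lam + real c * alpha)) / (lam + real c * alpha)"
    using pos by simp
  also have "\<dots> = lam * p (0, c - 1 + k) / (lam + real c * alpha)" unfolding eq ..
  finally have "p (0, c - 1 + Suc k) = lam * p (0, c - 1 + k) / (lam + real c * alpha)" .
  then have "p (0, c - 1 + Suc k) = rho * p (0, c - 1 + k)"
    unfolding rho_def by simp
  then show ?case using Suc by simp
qed

lemma q_rec:
  assumes "k \<ge> 1"
  shows "mu * q (Suc k) = LL * q k - lam * q (k - 1) - real c * alpha * pi0 * rho ^ k"
proof -
  have j: "c - 1 + k \<ge> 2" "min (c - 1 + k - 1) (c - 1) = c - 1" "min (c - 1 + k) c = c"
    using assms c2 by auto
  have "q k * (lam + real (c-1) * alpha + mu) = lam * q (k-1) + p (0, c-1+k) * (real c * alpha) + mu * q (Suc k)"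
    using level1[OF j(1)] unfolding j(2,3) q_def using assms by (simp add: add.commute)
  moreover have "real (c-1) = real c - 1" using c2 by simp
  ultimately show ?thesis unfolding LL_def p0_closed by (simp add: algebra_simps)
qed

lemma q_bounds: "0 \<le> q k" "q k \<le> 1"
  unfolding q_def using nonneg p_le1 c2 by auto

end


lemma alg1: fixes mu sg lam zz hh rho CC K LL q0 q1 q2 P :: real
assumes "mu*q2 = LL*q1 - lam*q0 - K*(P*rho)" "mu * sg = lam*zz" "hh*(1-rho*zz) = CC*rho*zz" "mu*CC = K" "lam*zz^2 - LL*zz + mu = 0"
shows "mu*((q1 - sg * q0 - hh*P) - zz*(q2 - sg * q1 - hh*(P*rho))) = 0"
  using assms by algebra

lemma geom_has_sum:
  fixes x a :: "'a::{real_normed_field, banach}"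
  assumes "norm x < 1"
  shows "((\<lambda>m. a * x^m) has_sum (a / (1 - x))) UNIV"
proof (rule norm_summable_imp_has_sum)
  show "summable (\<lambda>m. norm (a * x^m))"
    unfolding norm_mult norm_power
    by (rule summable_mult) (use assms in \<open>simp add: summable_geometric\<close>)
  show "(\<lambda>m. a * x^m) sums (a / (1 - x))"
    using sums_mult[OF geometric_sums[OF assms], of a] by simp
qed

lemma shift_has_sum:
  assumes "((\<lambda>m. f (m + c)) has_sum S) UNIV"
  shows "(f has_sum S) {c::nat..}"
proof -
  have "bij_betw (\<lambda>m. m + c) UNIV {c..}"
    by (rule bij_betwI[where g = "\<lambda>n. n - c"]) auto
  then show ?thesis using has_sum_reindex_bij_betw[of "\<lambda>m. m + c" UNIV "{c..}" f S] assms by simp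
qed

lemma alg2: fixes K P R z w d mu :: real
  assumes "w \<noteq> 0" "mu \<noteq> 0" "d \<noteq> 0"
  shows "K * (P * R * (z * w) / d) / (mu * w) = K * P / mu * R * z / d"
  using assms by (simp add: field_simps)

context setting begin

definition "zz = z1 c lam mu alpha"
definition "sg = lam * zz / mu"
definition "CC = real c * alpha * pi0 / mu"
definition "hh = CC * rho * zz / (1 - rho * zz)"
definition "r k = q (Suc k) - sg * q k"
definition "e k = r k - hh * rho ^ k"

lemma zz_pos: "zz > 0" and zz_lt1: "zz < 1"
  unfolding zz_def using z1_pos z1_lt1 by auto

lemma rz_lt1: "rho * zz < 1"
  proof -
  have "rho * zz < 1 * 1" using rho_pos rho_lt1 zz_pos zz_lt1 by (intro mult_strict_mono) auto
  then show ?thesis by simp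
qed

lemma sg_pos: "sg > 0" unfolding sg_def using lam mu zz_pos by simp

lemma sg_zh1: "sg * zhat1 c lam mu alpha = 1"
proof -
  have "lam * zz / mu * zhat1 c lam mu alpha = lam / mu * (zz * zhat1 c lam mu alpha)" by simp
  also have "\<dots> = 1" unfolding zz_def vieta(1) using lam mu by simp
  finally show ?thesis unfolding sg_def .
qed

lemma sg_lt1: "sg < 1"
proof -
  have "sg * zhat1 c lam mu alpha = 1" by (rule sg_zh1)
  moreover have "sg * 1 < sg * zhat1 c lam mu alpha" using zh1_gt1 sg_pos by (rule mult_strict_left_mono)
  ultimately show ?thesis by simp
qed

lemma e_step: "e k = zz * e (Suc k)"
proof -
  have A: "mu * q (Suc (Suc k)) = LL * q (Suc k) - lam * q k - (real c * alpha * pi0) * (rho ^ k * rho)"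
    using q_rec[of "Suc k"] by (simp add: mult.commute mult.left_commute)
  have B: "mu * sg = lam * zz" unfolding sg_def using mu by simp
  have C: "hh * (1 - rho * zz) = CC * rho * zz" unfolding hh_def using rz_lt1 by simp
  have D: "mu * CC = real c * alpha * pi0" unfolding CC_def using mu by simp
  have R: "lam * zz^2 - LL * zz + mu = 0" using z1_root unfolding zz_def .
  have "mu * ((q (Suc k) - sg * q k - hh * rho^k) - zz * (q (Suc (Suc k)) - sg * q (Suc k) - hh * (rho^k * rho))) = 0"
    by (rule alg1[OF A B C D R])
  then show ?thesis using mu unfolding e_def r_def by (simp add: mult.commute)
qed

lemma e0_pow: "e 0 = zz ^ k * e k"
proof (induction k)
  case 0 then show ?case by simp
next
  case (Suc k) then show ?case using e_step[of k] by simp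
qed

lemma e_bound: "\<bar>e k\<bar> \<le> 1 + sg + \<bar>hh\<bar>"
proof -
  have "\<bar>r k\<bar> \<le> 1 + sg"
  proof -
    have "0 \<le> sg * q k" "sg * q k \<le> sg" using q_bounds[of k] sg_pos by (simp_all add: mult_left_le)
    then show ?thesis unfolding r_def using q_bounds[of "Suc k"] sg_pos by linarith
  qed
  moreover have "\<bar>hh * rho ^ k\<bar> \<le> \<bar>hh\<bar>"
    using rho_pos rho_lt1 by (simp add: abs_mult mult_left_le power_le_one)
  ultimately show ?thesis unfolding e_def by linarith
qed

lemma e0: "e 0 = 0"
proof (rule ccontr)
  assume ne: "e 0 \<noteq> 0"
  define M where "M = 1 + sg + \<bar>hh\<bar>"
  have M: "M > 0" unfolding M_def using sg_pos by simp
  obtain k where k: "zz ^ k < \<bar>e 0\<bar> / M"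
    using real_arch_pow_inv[of "\<bar>e 0\<bar> / M" zz] ne M zz_lt1 by auto
  have "\<bar>e 0\<bar> = zz ^ k * \<bar>e k\<bar>" using e0_pow[of k] zz_pos by (simp add: abs_mult)
  also have "\<dots> \<le> zz ^ k * M" unfolding M_def using e_bound zz_pos by (simp add: mult_left_mono)
  also have "\<dots> < \<bar>e 0\<bar>" using k M by (simp add: pos_less_divide_eq mult.commute)
  finally show False by simp
qed

lemma e_zero: "e k = 0"
  using e0_pow[of k] e0 zz_pos by simp

lemma q_step: "q (Suc k) = sg * q k + hh * rho ^ k"
  using e_zero[of k] unfolding e_def r_def by simp

lemma Pi0hat_zz: "Pi0hat c p zz = pi0 * rho * zz ^ c / (1 - rho * zz)"
proof -
  have "((\<lambda>m. (pi0 * rho * zz ^ c) * (rho * zz) ^ m) has_sum (pi0 * rho * zz ^ c / (1 - rho * zz))) UNIV"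
    by (rule geom_has_sum) (use rho_pos zz_pos rz_lt1 in simp)
  moreover have "p (0, m + c) * zz ^ (m + c) = (pi0 * rho * zz ^ c) * (rho * zz) ^ m" for m
  proof -
    have "p (0, m + c) = p (0, c - 1 + Suc m)"
      by (rule arg_cong[where f="\<lambda>j. p (0,j)"]) (use c2 in arith)
    then have "p (0, m + c) = pi0 * rho ^ (Suc m)" using p0_closed[of "Suc m"] by simp
    then show ?thesis by (simp add: power_add power_mult_distrib)
  qed
  ultimately have "((\<lambda>m. p (0, m + c) * zz ^ (m + c)) has_sum (pi0 * rho * zz ^ c / (1 - rho * zz))) UNIV"
    by simp
  then have "((\<lambda>j. p (0, j) * zz ^ j) has_sum (pi0 * rho * zz ^ c / (1 - rho * zz))) {c..}"
    by (rule shift_has_sum)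
  then show ?thesis unfolding Pi0hat_def by (rule infsumI)
qed

lemma ac_eq: "fst (ab_rec c lam mu alpha p 0) = hh"
proof -
  have zc: "zz ^ c = zz * zz ^ (c - 1)" using c2 by (simp add: power_eq_if)
  have "real c * alpha * (pi0 * rho * zz ^ c / (1 - rho * zz)) / (mu * zz ^ (c - 1)) = hh"
    unfolding hh_def CC_def zc
    by (rule alg2[of "zz ^ (c - 1)" mu "1 - rho * zz" "real c * alpha" pi0 rho zz]) (use zz_pos mu rz_lt1 in auto)
  then show ?thesis using Pi0hat_zz by (simp add: zz_def)
qed

lemma bc_eq: "snd (ab_rec c lam mu alpha p 0) = sg"
  by (simp add: sg_def zz_def)

lemma hh_pos: "hh > 0"
  unfolding hh_def CC_def using alpha c2 pi0_pos mu rho_pos zz_pos rz_lt1 by simp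

end

lemma alg3: fixes X d A B Z :: real
  assumes "d \<noteq> 0" "X * d = A + B * Z"
  shows "X = A / d + B / d * Z"
  using assms by (simp add: field_simps)
lemma alg4: fixes K lam mu z0 zz zh :: real
  assumes "z0 \<noteq> 0" "zh \<noteq> 0" "zz \<noteq> 0" "lam \<noteq> 0" "mu \<noteq> 0" "z0 \<noteq> zz" "z0 \<noteq> zh" "zz*zh = mu/lam"
  shows "K*z0/(-lam*(z0-zz)*(z0-zh)) * (1/z0 - 1/zh) = K/mu * (1/z0) * zz / (1 - (1/z0)*zz)"
proof -
  have d1: "z0 - zz \<noteq> 0" "z0 - zh \<noteq> 0" "zh - z0 \<noteq> 0" using assms by auto
  have s1: "1/z0 - 1/zh = (zh - z0)/(z0*zh)" using assms by (simp add: field_simps)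
  have r: "K*z0*(zh-z0)*(lam*zh*(z0-zz)) = K*((-lam*(z0-zz)*(z0-zh))*(z0*zh))" by algebra
  have nz: "(-lam*(z0-zz)*(z0-zh))*(z0*zh) \<noteq> 0" "lam*zh*(z0-zz) \<noteq> 0" using assms(1-5) d1 by auto
  have "K*z0/(-lam*(z0-zz)*(z0-zh)) * ((zh - z0)/(z0*zh)) = (K*z0*(zh-z0)) / ((-lam*(z0-zz)*(z0-zh))*(z0*zh))"
    by simp
  also have "\<dots> = K/(lam*zh*(z0-zz))" by (subst frac_eq_eq[OF nz]) (rule r)
  finally have s2: "K*z0/(-lam*(z0-zz)*(z0-zh)) * ((zh - z0)/(z0*zh)) = K/(lam*zh*(z0-zz))" .
  have s3: "K/mu * (1/z0) * zz / (1 - (1/z0)*zz) = K*zz/(mu*(z0-zz))"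
    using assms(1-5) d1 by (simp add: field_simps)
  have lz: "lam*zh = mu/zz" using assms by (simp add: field_simps)
  have s4: "K/(lam*zh*(z0-zz)) = K*zz/(mu*(z0-zz))" unfolding lz using assms by simp
  show ?thesis unfolding s1 s2 s3 s4 ..
qed
lemma alg5: fixes a r z :: complex
  assumes "r \<noteq> 0"
  shows "a / (1/r - z) = a * r / (1 - r*z)"
proof -
  have "1/r - z = (1 - r*z)/r" using assms by (simp add: field_simps)
  then show ?thesis by simp
qed

context setting begin

lemma ab_props:
  "k \<le> c - 1 \<Longrightarrow> fst (ab_rec c lam mu alpha p k) > 0 \<and> snd (ab_rec c lam mu alpha p k) > 0
     \<and> snd (ab_rec c lam mu alpha p k) < lam / mu
     \<and> (k \<le> c - 2 \<longrightarrow> p (1, c - k) = fst (ab_rec c lam mu alpha p k) + snd (ab_rec c lam mu alpha p k) * p (1, c - k - 1))"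
proof (induction k)
  case 0
  have q1: "q 1 = sg * q 0 + hh" using q_step[of 0] by simp
  have "p (1, c) = q 1" unfolding q_def using c2 by simp
  moreover have "p (1, c - 1) = q 0" unfolding q_def by simp
  ultimately have i: "p (1, c) = hh + sg * p (1, c - 1)" using q1 by simp
  have "sg < lam / mu" unfolding sg_def using zz_lt1 lam mu by (simp add: divide_strict_right_mono)
  then show ?case using i ac_eq bc_eq hh_pos sg_pos by simp
next
  case (Suc k)
  obtain a' b' where ab: "ab_rec c lam mu alpha p k = (a', b')" by force
  have IH: "a' > 0" "b' > 0" "b' < lam / mu" "p (1, c - k) = a' + b' * p (1, c - k - 1)"
    using Suc.IH Suc.prems ab by auto
  define j where "j = c - Suc k"
  have j1: "j \<ge> 1" "j < c" "j + 1 = c - k" "c - k - 1 = j" using Suc.prems c2 unfolding j_def by auto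
  define d where "d = lam + mu + (real j - 1) * alpha - mu * b'"
  have rec: "ab_rec c lam mu alpha p (Suc k) = ((real j * alpha * p (0, j) + mu * a') / d, lam / d)"
    by (simp add: ab j_def d_def Let_def)
  have mb: "mu * b' < lam" using IH(3) mu by (simp add: pos_less_divide_eq mult.commute)
  have ja: "(real j - 1) * alpha \<ge> 0" using j1 alpha by simp
  have dgt: "d > mu" unfolding d_def using mb ja by linarith
  have dpos: "d > 0" using dgt mu by linarith
  have apos: "(real j * alpha * p (0, j) + mu * a') / d > 0"
  proof -
    have "real j * alpha * p (0, j) \<ge> 0" using j1 alpha p0_pos[of j] by simp
    moreover have "mu * a' > 0" using mu IH(1) by simp
    ultimately show ?thesis using dpos by simp
  qed
  have bpos: "lam / d > 0" using lam dpos by simp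
  have blt: "lam / d < lam / mu" using lam mu dgt by (simp add: divide_strict_left_mono)
  have i: "p (1, c - Suc k) = (real j * alpha * p (0, j) + mu * a') / d + lam / d * p (1, c - Suc k - 1)"
    if "Suc k \<le> c - 2"
  proof -
    have j2: "j \<ge> 2" using that c2 unfolding j_def by auto
    have mn: "min (j - 1) (c - 1) = j - 1" "min j c = j" using j1 by auto
    have rj: "real (j - 1) = real j - 1" using j1 by simp
    have l1: "p (1,j) * (lam + (real j - 1) * alpha + mu)
       = lam * p (1,j-1) + p (0,j) * (real j * alpha) + mu * p (1,j+1)"
      using level1[OF j2] unfolding mn rj .
    have "p (1, j+1) = a' + b' * p (1, j)" using IH(4) j1 by simp
    then have "p (1,j) * d = (real j * alpha * p (0, j) + mu * a') + lam * p (1,j-1)"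
      using l1 unfolding d_def by (simp add: algebra_simps)
    then have "p (1,j) = (real j * alpha * p (0, j) + mu * a') / d + lam / d * p (1,j-1)"
      using dpos by (intro alg3) auto
    then show ?thesis unfolding j_def by simp
  qed
  show ?case unfolding rec using apos bpos blt i by simp
qed

lemma part_i: "2 \<le> j \<Longrightarrow> j \<le> c \<Longrightarrow>
    p (1, j) = a1 c lam mu alpha p j + b1 c lam mu alpha p j * p (1, j - 1)"
  using ab_props[of "c - j"] c2 unfolding a1_def b1_def by simp

lemma part_ii: "1 \<le> j \<Longrightarrow> j \<le> c \<Longrightarrow>
    a1 c lam mu alpha p j > 0 \<and> 0 < b1 c lam mu alpha p j \<and> b1 c lam mu alpha p j < lam / mu"
  using ab_props[of "c - j"] c2 unfolding a1_def b1_def by simp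

end


context setting begin

definition "A10 = real c * alpha * pi0 * zhat0 c lam alpha / f1 c lam mu alpha (zhat0 c lam alpha)"
definition "A11 = q 0 - A10"

lemma rho_inv: "rho = 1 / zhat0 c lam alpha" using zhat0_rho rho_pos by simp
lemma zh0_pos: "zhat0 c lam alpha > 0" using zhat0_rho rho_pos by simp
lemma zh0_gt1: "zhat0 c lam alpha > 1" using zhat0_rho rho_pos rho_lt1 by simp
lemma sg_inv: "sg = 1 / zhat1 c lam mu alpha" using sg_zh1 zh1_gt1 by (simp add: eq_divide_eq)
lemma zh1_inv: "zhat1 c lam mu alpha = 1 / sg" using sg_zh1 sg_pos by (simp add: eq_divide_eq mult.commute)

lemma A10_rel:
  assumes ne: "zhat0 c lam alpha \<noteq> zhat1 c lam mu alpha"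
  shows "A10 * (rho - sg) = hh"
proof -
  have "real c * alpha * pi0 * zhat0 c lam alpha /
      (- lam * (zhat0 c lam alpha - zz) * (zhat0 c lam alpha - zhat1 c lam mu alpha)) *
      (1 / zhat0 c lam alpha - 1 / zhat1 c lam mu alpha)
    = (real c * alpha * pi0) / mu * (1 / zhat0 c lam alpha) * zz / (1 - (1 / zhat0 c lam alpha) * zz)"
  proof (rule alg4)
    show "zhat0 c lam alpha \<noteq> 0" using zh0_pos by simp
    show "zhat1 c lam mu alpha \<noteq> 0" using zh1_gt1 by simp
    show "zz \<noteq> 0" using zz_pos by simp
    show "lam \<noteq> 0" "mu \<noteq> 0" using lam mu by auto
    show "zhat0 c lam alpha \<noteq> zz" using zh0_gt1 zz_lt1 by simp
    show "zhat0 c lam alpha \<noteq> zhat1 c lam mu alpha" by (rule ne)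
    show "zz * zhat1 c lam mu alpha = mu / lam" unfolding zz_def by (rule vieta(1))
  qed
  then show ?thesis
    unfolding A10_def hh_def CC_def f1_factor zz_def[symmetric] rho_inv[symmetric] sg_inv[symmetric]
    by simp
qed

lemma q_closed:
  assumes ne: "zhat0 c lam alpha \<noteq> zhat1 c lam mu alpha"
  shows "q k = A10 * rho ^ k + A11 * sg ^ k"
proof (induction k)
  case 0 then show ?case unfolding A11_def by simp
next
  case (Suc k)
  have "q (Suc k) = sg * q k + A10 * (rho - sg) * rho ^ k" using q_step[of k] A10_rel[OF ne] by simp
  also have "\<dots> = A10 * rho ^ Suc k + A11 * sg ^ Suc k" unfolding Suc by (simp add: algebra_simps)
  finally show ?case .
qed

lemma part_iii:
  assumes ne: "zhat0 c lam alpha \<noteq> zhat1 c lam mu alpha" and nz: "norm z \<le> 1"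
  shows "Pi1hat c p z = z ^ (c - 1) *
             (complex_of_real A10 / (complex_of_real (zhat0 c lam alpha) - z)
              + complex_of_real A11 / (complex_of_real (zhat1 c lam mu alpha) - z))"
proof -
  define w where "w = z ^ (c - 1)"
  have n1: "norm (complex_of_real rho * z) < 1"
  proof -
    have "norm (complex_of_real rho * z) = rho * norm z" using rho_pos by (simp add: norm_mult)
    also have "\<dots> \<le> rho" using nz rho_pos by (simp add: mult_left_le)
    finally show ?thesis using rho_lt1 by simp
  qed
  have n2: "norm (complex_of_real sg * z) < 1"
  proof -
    have "norm (complex_of_real sg * z) = sg * norm z" using sg_pos by (simp add: norm_mult)
    also have "\<dots> \<le> sg" using nz sg_pos by (simp add: mult_left_le)
    finally show ?thesis using sg_lt1 by simp
  qed
  define S where "S = w * complex_of_real (A10 * rho) / (1 - complex_of_real rho * z)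
      + w * complex_of_real (A11 * sg) / (1 - complex_of_real sg * z)"
  have hs: "((\<lambda>m. w * complex_of_real (A10 * rho) * (complex_of_real rho * z) ^ m
                + w * complex_of_real (A11 * sg) * (complex_of_real sg * z) ^ m) has_sum S) UNIV"
    unfolding S_def by (intro has_sum_add geom_has_sum n1 n2)
  have teq: "complex_of_real (p (1, m + c)) * z ^ (m + c - 1) =
      w * complex_of_real (A10 * rho) * (complex_of_real rho * z) ^ m
                + w * complex_of_real (A11 * sg) * (complex_of_real sg * z) ^ m" for m
  proof -
    have "p (1, m + c) = q (Suc m)" unfolding q_def
      by (rule arg_cong[where f="\<lambda>j. p (1,j)"]) (use c2 in arith)
    also have "\<dots> = A10 * rho ^ Suc m + A11 * sg ^ Suc m" by (rule q_closed[OF ne])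
    finally have pe: "p (1, m + c) = A10 * rho ^ Suc m + A11 * sg ^ Suc m" .
    have "m + c - 1 = (c - 1) + m" using c2 by arith
    then have ze: "z ^ (m + c - 1) = w * z ^ m" unfolding w_def by (simp add: power_add)
    show ?thesis unfolding pe ze by (simp add: algebra_simps power_mult_distrib)
  qed
  have "((\<lambda>m. complex_of_real (p (1, m + c)) * z ^ (m + c - 1)) has_sum S) UNIV"
    using hs unfolding teq .
  then have "((\<lambda>j. complex_of_real (p (1, j)) * z ^ (j - 1)) has_sum S) {c..}"
    by (rule shift_has_sum)
  then have P: "Pi1hat c p z = S" unfolding Pi1hat_def by (rule infsumI)
  have r0: "complex_of_real rho \<noteq> 0" "complex_of_real sg \<noteq> 0" using rho_pos sg_pos by auto
  have z0: "complex_of_real (zhat0 c lam alpha) = 1 / complex_of_real rho"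
    unfolding zhat0_rho by simp
  have z1': "complex_of_real (zhat1 c lam mu alpha) = 1 / complex_of_real sg"
    unfolding zh1_inv by simp
  show ?thesis unfolding P S_def z0 z1' alg5[OF r0(1)] alg5[OF r0(2)] w_def
    by (simp add: algebra_simps)
qed

end

theorem lemma3p1:
  fixes c :: nat and lam mu alpha :: real and p :: "nat \<times> nat \<Rightarrow> real"
  assumes "c \<ge> 2" and "lam > 0" and "mu > 0" and "alpha > 0"
    and "lam < real c * mu"
    and "stationary c lam mu alpha p"
  shows "(\<forall>j. 2 \<le> j \<and> j \<le> c \<longrightarrow>
            p (1, j) = a1 c lam mu alpha p j + b1 c lam mu alpha p j * p (1, j - 1))
    \<and> (\<forall>j. 1 \<le> j \<and> j \<le> c \<longrightarrow>
            a1 c lam mu alpha p j > 0 \<and> 0 < b1 c lam mu alpha p j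
            \<and> b1 c lam mu alpha p j < lam / mu)
    \<and> (zhat0 c lam alpha \<noteq> zhat1 c lam mu alpha \<longrightarrow>
        (let A10 = real c * alpha * p (0, c - 1) * zhat0 c lam alpha
                     / f1 c lam mu alpha (zhat0 c lam alpha);
             A11 = p (1, c - 1) - A10 in
         \<forall>z::complex. norm z \<le> 1 \<longrightarrow>
           Pi1hat c p z = z ^ (c - 1) *
             (complex_of_real A10 / (complex_of_real (zhat0 c lam alpha) - z)
              + complex_of_real A11 / (complex_of_real (zhat1 c lam mu alpha) - z))))"
  proof -
  interpret setting c lam mu alpha p using assms by unfold_locales
  have h0: "p (0, c - 1) = pi0" by (simp add: pi0_def)
  have h1: "p (1, c - 1) = q 0" by (simp add: q_def)
  show ?thesis
    unfolding Let_def h0 h1 A10_def[symmetric] A11_def[symmetric]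
    using part_i part_ii part_iii by blast
qed

end
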